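(* Let $n,m\in\mathbb{N}$ and $f,g:\mathbb{F}_2^n\to\mathbb{F}_2$. Then for every $\mathbf{z}\in\mathbb{F}_2^n$, $$C^{(m)}_{f,g}(\mathbf{z})=\zeta_m^{wt(\mathbf{z})}\sum_{\mathbf{u}\in\mathbb{F}_2^n}\mathcal{H}^{(m)}_f(\mathbf{u})\,\overline{\mathcal{H}^{(m)}_g(\mathbf{u})}\,(-1)^{\mathbf{u}\cdot\mathbf{z}}.$$
   Context: $\zeta_m=e^{2\pi i/m}$; $wt$ is Hamming weight; $\mathbf{x}\cdot\mathbf{y}=\bigoplus_i x_iy_i\in\mathbb{F}_2$; $\mathbf{x}\odot\mathbf{y}=\sum_i x_iy_i$ computed in the integers. The $m$-Hadamard transform is $\mathcal{H}^{(m)}_f(\boldsymbol{\omega})=2^{-n/2}\sum_{\mathbf{x}\in\mathbb{F}_2^n}(-1)^{f(\mathbf{x})\oplus\mathbf{x}\cdot\boldsymbol{\omega}}\zeta_m^{wt(\mathbf{x})}$, and the $m$-crosscorrelation is $C^{(m)}_{f,g}(\mathbf{y})=\sum_{\mathbf{x}\in\mathbb{F}_2^n}(-1)^{f(\mathbf{x})\oplus g(\mathbf{x}\oplus\mathbf{y})}(\zeta_m^2)^{\mathbf{x}\odot\mathbf{y}}$. *)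

theory Defs
  imports "HOL-Analysis.Analysis"
begin

text \<open>Vectors of F_2^n are boolean lists of length n (True = 1).\<close>

definition vecs :: "nat \<Rightarrow> bool list set" where
  "vecs n = {xs. length xs = n}"

definition zeta :: "nat \<Rightarrow> complex" where
  "zeta m = cis (2 * pi / real m)"

definition wt :: "bool list \<Rightarrow> nat" where
  "wt x = length (filter id x)"

definition dotF2 :: "bool list \<Rightarrow> bool list \<Rightarrow> bool" where
  "dotF2 x y = odd (length (filter id (map2 (\<and>) x y)))"

definition dotZ :: "bool list \<Rightarrow> bool list \<Rightarrow> nat" where
  "dotZ x y = length (filter id (map2 (\<and>) x y))"

definition xorv :: "bool list \<Rightarrow> bool list \<Rightarrow> bool list" where
  "xorv x y = map2 (\<noteq>) x y"

definition sgn1 :: "bool \<Rightarrow> complex" where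
  "sgn1 b = (if b then -1 else 1)"

definition mHadamard :: "nat \<Rightarrow> nat \<Rightarrow> (bool list \<Rightarrow> bool) \<Rightarrow> bool list \<Rightarrow> complex" where
  "mHadamard n m f w = (1 / sqrt (2 ^ n)) *
     (\<Sum>x\<in>vecs n. sgn1 (f x \<noteq> dotF2 x w) * zeta m ^ wt x)"

definition mCrosscorr :: "nat \<Rightarrow> nat \<Rightarrow> (bool list \<Rightarrow> bool) \<Rightarrow> (bool list \<Rightarrow> bool) \<Rightarrow> bool list \<Rightarrow> complex" where
  "mCrosscorr n m f g y =
     (\<Sum>x\<in>vecs n. sgn1 (f x \<noteq> g (xorv x y)) * (zeta m ^ 2) ^ dotZ x y)"

end

theory Submission
  imports Defs
begin

lemma sgn1_xor: "sgn1 (a \<noteq> b) = sgn1 a * sgn1 b"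
  by (simp add: sgn1_def)
lemma sgn1_xor2: "sgn1 (a = (\<not> b)) = sgn1 a * sgn1 b"
  by (simp add: sgn1_def)

lemma dotF2_Nil[simp]: "dotF2 [] [] = False" by (simp add: dotF2_def)
lemma dotF2_Cons[simp]: "dotF2 (a#x) (b#y) = ((a \<and> b) \<noteq> dotF2 x y)" by (cases a; cases b) (simp_all add: dotF2_def)
lemma dotZ_Nil[simp]: "dotZ [] [] = 0" by (simp add: dotZ_def)
lemma dotZ_Cons[simp]: "dotZ (a#x) (b#y) = (if a \<and> b then 1 else 0) + dotZ x y" by (simp add: dotZ_def)
lemma wt_Nil[simp]: "wt [] = 0" by (simp add: wt_def)
lemma wt_Cons[simp]: "wt (a#x) = (if a then 1 else 0) + wt x" by (simp add: wt_def)
lemma xorv_Nil[simp]: "xorv [] [] = []" by (simp add: xorv_def)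
lemma xorv_Cons[simp]: "xorv (a#x) (b#y) = (a \<noteq> b) # xorv x y" by (simp add: xorv_def)
lemma xorv_len[simp]: "length (xorv x y) = min (length x) (length y)" by (simp add: xorv_def)

lemma dotF2_comm: "length x = length y \<Longrightarrow> dotF2 x y = dotF2 y x"
  by (induction x y rule: list_induct2) auto

lemma dotF2_xor: "length x = length u \<Longrightarrow> length y = length u \<Longrightarrow>
  sgn1 (dotF2 (xorv x y) u) = sgn1 (dotF2 x u) * sgn1 (dotF2 y u)"
proof (induction u arbitrary: x y)
  case Nil then show ?case by (simp add: sgn1_def)
next
  case (Cons c u)
  then obtain a x' b y' where "x = a#x'" "y = b#y'" by (metis length_Suc_conv)
  have e: "sgn1 ((a \<noteq> b) \<and> c) = sgn1 (a \<and> c) * sgn1 (b \<and> c)"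
    by (cases a; cases b; cases c) (simp_all add: sgn1_def)
  have "sgn1 (dotF2 (xorv x y) (c#u)) = sgn1 ((a \<noteq> b) \<and> c) * sgn1 (dotF2 (xorv x' y') u)"
    using \<open>x = a#x'\<close> \<open>y = b#y'\<close> by (simp only: xorv_Cons dotF2_Cons sgn1_xor)
  also have "\<dots> = sgn1 (a \<and> c) * sgn1 (b \<and> c) * (sgn1 (dotF2 x' u) * sgn1 (dotF2 y' u))"
    using Cons \<open>x = a#x'\<close> \<open>y = b#y'\<close> by (simp only: e) simp
  also have "\<dots> = sgn1 (dotF2 x (c#u)) * sgn1 (dotF2 y (c#u))"
    using \<open>x = a#x'\<close> \<open>y = b#y'\<close> by (simp only: dotF2_Cons sgn1_xor) (simp add: algebra_simps)
  finally show ?case .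
qed

lemma wt_xor: "length x = length z \<Longrightarrow> wt x + wt z = wt (xorv x z) + 2 * dotZ x z"
  by (induction x z rule: list_induct2) auto

lemma xor_zero: "length x = n \<Longrightarrow> length y = n \<Longrightarrow> length z = n \<Longrightarrow>
  (xorv (xorv x y) z = replicate n False) = (y = xorv x z)"
proof (induction n arbitrary: x y z)
  case 0 then show ?case by simp
next
  case (Suc n)
  then obtain a x' b y' c z' where "x = a#x'" "y = b#y'" "z = c#z'" by (metis length_Suc_conv)
  with Suc show ?case by auto
qed

lemma vecs_0: "vecs 0 = {[]}" by (auto simp: vecs_def)
lemma vecs_Suc: "vecs (Suc n) = (\<lambda>(a,u). a#u) ` (UNIV \<times> vecs n)"
  by (auto simp: vecs_def image_iff length_Suc_conv)
lemma finite_vecs[simp]: "finite (vecs n)"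
  by (induction n) (auto simp: vecs_0 vecs_Suc)

lemma sum_vecs_Suc: "(\<Sum>v\<in>vecs (Suc n). h v) = (\<Sum>a\<in>UNIV. \<Sum>u\<in>vecs n. h (a#u))"
proof -
  have "(\<Sum>v\<in>vecs (Suc n). h v) = (\<Sum>p\<in>UNIV \<times> vecs n. h ((\<lambda>(a,u). a#u) p))"
    unfolding vecs_Suc by (subst sum.reindex) (auto simp: inj_on_def intro!: sum.cong)
  also have "\<dots> = (\<Sum>(a,u)\<in>UNIV \<times> vecs n. h (a#u))"
    by (rule sum.cong) auto
  also have "\<dots> = (\<Sum>a\<in>UNIV. \<Sum>u\<in>vecs n. h (a#u))"
    by (rule sum.cartesian_product[symmetric])
  finally show ?thesis .
qed

lemma orth: "length w = n \<Longrightarrow>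
  (\<Sum>u\<in>vecs n. sgn1 (dotF2 u w)) = (if w = replicate n False then 2 ^ n else 0)"
proof (induction n arbitrary: w)
  case 0 then show ?case by (simp add: vecs_0 sgn1_def)
next
  case (Suc n)
  then obtain c w' where w: "w = c#w'" "length w' = n" by (metis length_Suc_conv)
  have "(\<Sum>u\<in>vecs (Suc n). sgn1 (dotF2 u w)) =
     (\<Sum>a\<in>UNIV. sgn1 (a \<and> c) * (\<Sum>u\<in>vecs n. sgn1 (dotF2 u w')))"
    by (simp add: sum_vecs_Suc w sgn1_xor sgn1_xor2 sum_distrib_left)
  also have "\<dots> = (\<Sum>a\<in>UNIV. sgn1 (a \<and> c)) * (\<Sum>u\<in>vecs n. sgn1 (dotF2 u w'))"
    by (simp add: sum_distrib_right)
  also have "\<dots> = (if w = replicate (Suc n) False then 2 ^ Suc n else 0)"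
    using Suc.IH[OF w(2)] by (simp add: w UNIV_bool sgn1_def)
  finally show ?case .
qed


lemma cnj_sgn1[simp]: "cnj (sgn1 b) = sgn1 b" by (simp add: sgn1_def)

lemma zeta_cnj: "cnj (zeta m) = inverse (zeta m)"
  by (simp add: zeta_def cis_cnj cis_inverse[symmetric] del: cis_inverse)

lemma zeta_nz[simp]: "zeta m \<noteq> 0" by (simp add: zeta_def)

lemma pointwise: assumes "length x = length z"
  shows "zeta m ^ wt z * (zeta m ^ wt x * cnj (zeta m) ^ wt (xorv x z)) = (zeta m ^ 2) ^ dotZ x z"
proof -
  have "zeta m ^ wt z * zeta m ^ wt x = zeta m ^ wt (xorv x z) * (zeta m ^ 2) ^ dotZ x z"
    using wt_xor[OF assms] by (metis add.commute power_add power_mult)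
  then show ?thesis by (simp add: zeta_cnj power_inverse field_simps)
qed

theorem theorem5:
  fixes n m :: nat and f g :: "bool list \<Rightarrow> bool" and z :: "bool list"
  assumes "z \<in> vecs n"
  shows "mCrosscorr n m f g z =
    zeta m ^ wt z * (\<Sum>u\<in>vecs n. mHadamard n m f u * cnj (mHadamard n m g u) * sgn1 (dotF2 u z))"
proof -
  define \<zeta> where "\<zeta> = zeta m"
  define c :: complex where "c = 1 / sqrt (2 ^ n)"
  have lz: "length z = n" using assms by (simp add: vecs_def)
  have cc: "c * c * 2 ^ n = 1" unfolding c_def
    by (simp add: field_simps flip: of_real_mult of_real_power) (metis of_real_numeral of_real_power)
  define A where "A x u = sgn1 (f x) * sgn1 (dotF2 x u) * \<zeta> ^ wt x" for x u
  define B where "B y u = sgn1 (g y) * sgn1 (dotF2 y u) * cnj \<zeta> ^ wt y" for y u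
  have Hf: "mHadamard n m f u = c * (\<Sum>x\<in>vecs n. A x u)" for u
    unfolding mHadamard_def A_def c_def \<zeta>_def by (simp add: sgn1_xor sgn1_xor2)
  have Hg: "cnj (mHadamard n m g u) = c * (\<Sum>y\<in>vecs n. B y u)" for u
    unfolding mHadamard_def B_def c_def \<zeta>_def by (simp add: sgn1_xor sgn1_xor2)
  have sgnprod: "sgn1 (dotF2 x u) * sgn1 (dotF2 y u) * sgn1 (dotF2 u z) = sgn1 (dotF2 u (xorv (xorv x y) z))"
    if "x \<in> vecs n" "y \<in> vecs n" "u \<in> vecs n" for x y u
  proof -
    have l: "length x = n" "length y = n" "length u = n" using that by (auto simp: vecs_def)
    have "sgn1 (dotF2 u (xorv (xorv x y) z)) = sgn1 (dotF2 (xorv (xorv x y) z) u)"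
      using l lz by (simp add: dotF2_comm)
    also have "\<dots> = sgn1 (dotF2 x u) * sgn1 (dotF2 y u) * sgn1 (dotF2 z u)"
      using l lz by (simp add: dotF2_xor)
    also have "sgn1 (dotF2 z u) = sgn1 (dotF2 u z)" using l lz by (simp add: dotF2_comm)
    finally show ?thesis by simp
  qed
  have "(\<Sum>u\<in>vecs n. mHadamard n m f u * cnj (mHadamard n m g u) * sgn1 (dotF2 u z))
     = (\<Sum>u\<in>vecs n. \<Sum>x\<in>vecs n. \<Sum>y\<in>vecs n. c * c * (A x u * B y u * sgn1 (dotF2 u z)))"
    apply (simp add: Hf Hg sum_distrib_left sum_distrib_right mult_ac) apply (rule sum.cong[OF refl]) by (rule sum.swap)
  also have "\<dots> = (\<Sum>x\<in>vecs n. \<Sum>y\<in>vecs n. \<Sum>u\<in>vecs n. c * c * (A x u * B y u * sgn1 (dotF2 u z)))"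
    apply (rule trans[OF sum.swap]) apply (rule sum.cong[OF refl]) by (rule sum.swap)
  also have "\<dots> = (\<Sum>x\<in>vecs n. \<Sum>y\<in>vecs n. c * c * (sgn1 (f x) * sgn1 (g y) * \<zeta> ^ wt x * cnj \<zeta> ^ wt y)
        * (\<Sum>u\<in>vecs n. sgn1 (dotF2 u (xorv (xorv x y) z))))"
  proof (intro sum.cong refl)
    fix x y assume xy: "x \<in> vecs n" "y \<in> vecs n"
    show "(\<Sum>u\<in>vecs n. c * c * (A x u * B y u * sgn1 (dotF2 u z))) = c * c * (sgn1 (f x) * sgn1 (g y) * \<zeta> ^ wt x * cnj \<zeta> ^ wt y)
        * (\<Sum>u\<in>vecs n. sgn1 (dotF2 u (xorv (xorv x y) z)))"
      unfolding sum_distrib_left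
    proof (intro sum.cong refl)
      fix u assume "u \<in> vecs n"
      from sgnprod[OF xy this, symmetric] show "c * c * (A x u * B y u * sgn1 (dotF2 u z)) = c * c * (sgn1 (f x) * sgn1 (g y) * \<zeta> ^ wt x * cnj \<zeta> ^ wt y)
        * sgn1 (dotF2 u (xorv (xorv x y) z))"
        unfolding A_def B_def by (simp add: mult_ac)
    qed
  qed
  also have "\<dots> = (\<Sum>x\<in>vecs n. \<Sum>y\<in>vecs n. if y = xorv x z then
         c * c * 2 ^ n * (sgn1 (f x) * sgn1 (g y) * \<zeta> ^ wt x * cnj \<zeta> ^ wt y) else 0)"
  proof (intro sum.cong refl)
    fix x y assume xy: "x \<in> vecs n" "y \<in> vecs n"
    then have l: "length x = n" "length y = n" using xy by (auto simp: vecs_def)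
    show "c * c * (sgn1 (f x) * sgn1 (g y) * \<zeta> ^ wt x * cnj \<zeta> ^ wt y)
        * (\<Sum>u\<in>vecs n. sgn1 (dotF2 u (xorv (xorv x y) z))) = (if y = xorv x z then
         c * c * 2 ^ n * (sgn1 (f x) * sgn1 (g y) * \<zeta> ^ wt x * cnj \<zeta> ^ wt y) else 0)"
      using l lz by (simp add: orth xor_zero)
  qed
  also have "\<dots> = (\<Sum>x\<in>vecs n. sgn1 (f x) * sgn1 (g (xorv x z)) * \<zeta> ^ wt x * cnj \<zeta> ^ wt (xorv x z))"
  proof (intro sum.cong refl)
    fix x assume "x \<in> vecs n"
    then have "xorv x z \<in> vecs n" using lz by (simp add: vecs_def)
    then show "(\<Sum>y\<in>vecs n. if y = xorv x z then
         c * c * 2 ^ n * (sgn1 (f x) * sgn1 (g y) * \<zeta> ^ wt x * cnj \<zeta> ^ wt y) else 0)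
       = sgn1 (f x) * sgn1 (g (xorv x z)) * \<zeta> ^ wt x * cnj \<zeta> ^ wt (xorv x z)"
      by (simp add: sum.delta' cc)
  qed
  finally have "zeta m ^ wt z * (\<Sum>u\<in>vecs n. mHadamard n m f u * cnj (mHadamard n m g u) * sgn1 (dotF2 u z))
     = (\<Sum>x\<in>vecs n. sgn1 (f x) * sgn1 (g (xorv x z)) * (\<zeta> ^ wt z * (\<zeta> ^ wt x * cnj \<zeta> ^ wt (xorv x z))))"
    by (simp add: sum_distrib_left \<zeta>_def mult_ac)
  also have "\<dots> = mCrosscorr n m f g z"
    unfolding mCrosscorr_def
  proof (intro sum.cong refl)
    fix x assume "x \<in> vecs n"
    then have "length x = length z" using lz by (simp add: vecs_def)
    then show "sgn1 (f x) * sgn1 (g (xorv x z)) * (\<zeta> ^ wt z * (\<zeta> ^ wt x * cnj \<zeta> ^ wt (xorv x z)))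
      = sgn1 (f x \<noteq> g (xorv x z)) * (zeta m ^ 2) ^ dotZ x z"
      unfolding \<zeta>_def by (simp add: pointwise sgn1_xor sgn1_xor2)
  qed
  finally show ?thesis by simp
qed

end
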